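(* Let $Q$ be a key polynomial for $\nu$ and let $f,q,r\in K[x]$ with $f=qQ+r$ and $\gamma:=\max\{\epsilon(f),\epsilon(r)\}<\epsilon(Q)$. Then \[ \nu_Q(qQ)-(\epsilon(Q)-\gamma)\ \ge\ \nu(f)=\nu(r). \]
   Context: Let $K$ be a field and $\nu$ a rank one valuation on $K[x]$ (values in $\mathbb{R}\cup\{\infty\}$). For $f\in K[x]$ and $b\ge 0$, $\partial_bf$ denotes the $b$-th Hasse derivative of $f$ (defined by $f(x+y)=\sum_b\partial_bf(x)y^b$). For nonconstant $f$ set $\epsilon(f)=\max_{1\le b\le\deg f}\frac{\nu(f)-\nu(\partial_bf)}{b}$ (with $\epsilon(c)=-\infty$ for constants $c$). A monic $Q\in K[x]$ is a key polynomial for $\nu$ if for every $f\in K[x]$, $\epsilon(f)\ge\epsilon(Q)$ implies $\deg f\ge\deg Q$. For a monic $Q$ of degree $n\ge1$, every $f\in K[x]$ has a unique $Q$-expansion $f=\sum_{i=0}^ra_iQ^i$ with $\deg a_i<n$, and the truncation is $\nu_Q(f)=\min_i\nu(a_iQ^i)$. *)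

theory Defs
  imports "HOL-Computational_Algebra.Polynomial" "HOL-Library.Extended_Real"
begin

definition rank_one_valuation :: "('a::field poly \<Rightarrow> ereal) \<Rightarrow> bool" where
  "rank_one_valuation \<nu> \<longleftrightarrow>
     (\<forall>f. \<nu> f \<noteq> -\<infinity>) \<and>
     (\<forall>f. \<nu> f = \<infinity> \<longleftrightarrow> f = 0) \<and>
     (\<forall>f g. \<nu> (f * g) = \<nu> f + \<nu> g) \<and>
     (\<forall>f g. min (\<nu> f) (\<nu> g) \<le> \<nu> (f + g))"

text \<open>Hasse derivatives: hasse b f is the coefficient of y^b in f(x+y),
  computed in (K[x])[y].\<close>
definition hasse :: "nat \<Rightarrow> 'a::comm_ring_1 poly \<Rightarrow> 'a poly" where
  "hasse b f = coeff (pcompose (map_poly (\<lambda>c. [:c:]) f) [:[:0, 1:], 1:]) b"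

definition eps :: "('a::field poly \<Rightarrow> ereal) \<Rightarrow> 'a poly \<Rightarrow> ereal" where
  "eps \<nu> f = (if degree f = 0 then -\<infinity>
     else Max ((\<lambda>b. (\<nu> f - \<nu> (hasse b f)) / ereal (real b)) ` {1..degree f}))"

definition key_poly :: "('a::field poly \<Rightarrow> ereal) \<Rightarrow> 'a poly \<Rightarrow> bool" where
  "key_poly \<nu> Q \<longleftrightarrow> lead_coeff Q = 1 \<and>
     (\<forall>f. eps \<nu> Q \<le> eps \<nu> f \<longrightarrow> degree Q \<le> degree f)"

text \<open>The i-th coefficient of the Q-expansion f = sum a_i Q^i, deg a_i < deg Q.\<close>
definition qexp_coeff :: "'a::field poly \<Rightarrow> 'a poly \<Rightarrow> nat \<Rightarrow> 'a poly" where
  "qexp_coeff Q f i = (f div Q ^ i) mod Q"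

definition trunc_val :: "('a::field poly \<Rightarrow> ereal) \<Rightarrow> 'a poly \<Rightarrow> 'a poly \<Rightarrow> ereal" where
  "trunc_val \<nu> Q f = Min ((\<lambda>i. \<nu> (qexp_coeff Q f i * Q ^ i)) ` {0..degree f})"

end

theory Submission
  imports Defs
begin


definition TT :: "'a::comm_ring_1 poly \<Rightarrow> 'a poly poly" where
  "TT h = pcompose (map_poly (\<lambda>c. [:c:]) h) [:[:0, 1:], 1:]"

lemma hasse_TT: "hasse b h = coeff (TT h) b"
  by (simp add: hasse_def TT_def)

lemma const_poly_sum: "[:sum f A:] = (\<Sum>a\<in>A. [:f a:])"
proof (induction A rule: infinite_finite_induct)
  case (insert x F)
  have "[:f x + sum f F:] = [:f x:] + [:sum f F:]" by (metis add_pCons add_0)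
  then show ?case using insert by simp
qed auto

lemma map_const_mult:
  "map_poly (\<lambda>c. [:c:]) (p * q) = map_poly (\<lambda>c. [:c::'a::comm_ring_1:]) p * map_poly (\<lambda>c. [:c:]) q"
  by (intro poly_eqI) (simp add: coeff_map_poly coeff_mult const_poly_sum mult_to_poly mult.commute)

lemma map_const_add:
  "map_poly (\<lambda>c. [:c:]) (p + q) = map_poly (\<lambda>c. [:c::'a::comm_ring_1:]) p + map_poly (\<lambda>c. [:c:]) q"
  by (intro poly_eqI) (simp add: coeff_map_poly)

lemma map_const_uminus:
  "map_poly (\<lambda>c. [:c:]) (- p) = - map_poly (\<lambda>c. [:c::'a::comm_ring_1:]) p"
  by (intro poly_eqI) (simp add: coeff_map_poly)

lemma TT_mult: "TT (p * q) = TT p * TT q"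
  by (simp add: TT_def map_const_mult pcompose_mult)
lemma TT_add: "TT (p + q) = TT p + TT q"
  by (simp add: TT_def map_const_add pcompose_add)
lemma TT_uminus: "TT (- p) = - TT p"
  by (simp add: TT_def map_const_uminus pcompose_uminus)
lemma TT_diff: "TT (p - q) = TT p - TT q"
  using TT_add[of p "-q"] TT_uminus[of q] by simp
lemma TT_0[simp]: "TT 0 = 0" by (simp add: TT_def)

lemma poly_map_const: "poly (map_poly (\<lambda>c. [:c::'a::comm_ring_1:]) h) [:0, 1:] = h"
  by (induction h) (auto simp: map_poly_pCons)

lemma coeff_TT_0: "coeff (TT h) 0 = h"
  by (simp add: TT_def poly_map_const)

lemma degree_TT: "degree (TT (h::'a::idom poly)) = degree h"
  by (simp add: TT_def degree_pcompose degree_map_poly)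

lemma lead_TT: "h \<noteq> 0 \<Longrightarrow> coeff (TT (h::'a::idom poly)) (degree h) = [:lead_coeff h:]"
proof -
  have "lead_coeff (TT h) = lead_coeff (map_poly (\<lambda>c. [:c:]) h) * lead_coeff [:[:0, 1:], 1:] ^ degree (map_poly (\<lambda>c. [:c:]) h)"
    unfolding TT_def by (rule lead_coeff_comp) simp
  then show ?thesis using degree_TT[of h] by (simp add: coeff_map_poly degree_map_poly)
qed

lemma coeff_TT_big: "degree (h::'a::idom poly) < b \<Longrightarrow> coeff (TT h) b = 0"
  by (simp add: coeff_eq_0 degree_TT)

lemma min_add_le: "(c::ereal) \<le> a + e \<Longrightarrow> c \<le> b + e \<Longrightarrow> c \<le> min a b + e"
  by (simp add: min_def)
lemma min_add_less: "(c::ereal) < a + e \<Longrightarrow> c < b + e \<Longrightarrow> c < min a b + e"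
  by (simp add: min_def)
lemma min_min_add_le: "(x::ereal) \<le> a + e \<Longrightarrow> y \<le> b + e \<Longrightarrow> min x y \<le> min a b + e"
  by (rule min_add_le) (auto intro: order_trans[OF min.cobounded1] order_trans[OF min.cobounded2])



locale rv =
  fixes \<nu> :: "'a::field poly \<Rightarrow> ereal"
  assumes rv: "rank_one_valuation \<nu>"
begin

lemma nninf: "\<nu> f \<noteq> -\<infinity>" using rv by (simp add: rank_one_valuation_def)
lemma inf_iff: "\<nu> f = \<infinity> \<longleftrightarrow> f = 0" using rv by (simp add: rank_one_valuation_def)
lemma vmult: "\<nu> (f * g) = \<nu> f + \<nu> g" using rv by (simp add: rank_one_valuation_def)
lemma ultra: "min (\<nu> f) (\<nu> g) \<le> \<nu> (f + g)" using rv by (simp add: rank_one_valuation_def)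
lemma v0[simp]: "\<nu> 0 = \<infinity>" using inf_iff by simp

lemma fin: "f \<noteq> 0 \<Longrightarrow> \<nu> f = ereal (real_of_ereal (\<nu> f))"
  using nninf[of f] inf_iff[of f] by (cases "\<nu> f") auto

lemma v1: "\<nu> 1 = 0"
proof -
  obtain r where r: "\<nu> 1 = ereal r" using fin[of 1] by auto
  have "\<nu> 1 = \<nu> 1 + \<nu> 1" using vmult[of 1 1] by simp
  then have "r = r + r" using r by simp
  then show ?thesis using r by (simp add: zero_ereal_def)
qed

lemma vm1: "\<nu> (-1) = 0"
proof -
  obtain r where r: "\<nu> (-1) = ereal r" using fin[of "-1"] by auto
  have "\<nu> 1 = \<nu> (-1) + \<nu> (-1)" using vmult[of "-1" "-1"] by simp
  then have "0 = r + r" using r v1 by (simp add: zero_ereal_def)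
  then show ?thesis using r by (simp add: zero_ereal_def)
qed

lemma vuminus: "\<nu> (- f) = \<nu> f"
  using vmult[of "-1" f] vm1 by simp

lemma vdiff: "min (\<nu> f) (\<nu> g) \<le> \<nu> (f - g)"
  using ultra[of f "-g"] vuminus[of g] by simp

lemma strict: assumes "\<nu> a < \<nu> b" shows "\<nu> (a + b) = \<nu> a"
proof -
  have "min (\<nu> (a+b)) (\<nu> b) \<le> \<nu> a" using vdiff[of "a+b" b] by simp
  then have "\<nu> (a+b) \<le> \<nu> a" using assms by (auto simp: min_def split: if_splits)
  moreover have "\<nu> a \<le> \<nu> (a+b)" using ultra[of a b] assms by simp
  ultimately show ?thesis by simp
qed

lemma sum_ge: assumes "\<And>i. i \<in> S \<Longrightarrow> c \<le> \<nu> (F i) + ereal e"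
  shows "c \<le> \<nu> (sum F S) + ereal e"
  using assms
proof (induction S rule: infinite_finite_induct)
  case (insert x S)
  have "c \<le> \<nu> (F x) + ereal e" "c \<le> \<nu> (sum F S) + ereal e" using insert by auto
  moreover have "min (\<nu> (F x)) (\<nu> (sum F S)) \<le> \<nu> (F x + sum F S)" by (rule ultra)
  ultimately have "c \<le> min (\<nu> (F x)) (\<nu> (sum F S)) + ereal e"
    by (intro min_add_le)
  also have "\<dots> \<le> \<nu> (F x + sum F S) + ereal e"
    by (intro add_right_mono ultra)
  finally show ?case using insert by simp
qed auto

lemma sum_gt: assumes "\<And>i. i \<in> S \<Longrightarrow> c < \<nu> (F i) + ereal e" and "c < \<infinity>"
  shows "c < \<nu> (sum F S) + ereal e"
  using assms
proof (induction S rule: infinite_finite_induct)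
  case (insert x S)
  have "c < \<nu> (F x) + ereal e" "c < \<nu> (sum F S) + ereal e" using insert by auto
  then have "c < min (\<nu> (F x)) (\<nu> (sum F S)) + ereal e"
    by (intro min_add_less)
  also have "\<dots> \<le> \<nu> (F x + sum F S) + ereal e"
    by (intro add_right_mono ultra)
  finally show ?case using insert by simp
qed auto

lemma vpow: assumes "f \<noteq> 0" shows "\<nu> (f ^ j) = ereal (real j * real_of_ereal (\<nu> f))"
proof -
  obtain r where r: "\<nu> f = ereal r" using fin[OF assms] by auto
  have "\<nu> (f ^ j) = ereal (real j * r)"
  proof (induction j)
    case 0 then show ?case using v1 by (simp add: zero_ereal_def)
  next
    case (Suc j)
    have "\<nu> (f ^ Suc j) = \<nu> f + \<nu> (f ^ j)" by (simp add: vmult)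
    also have "\<dots> = ereal (r + real j * r)" using Suc r by simp
    finally show ?case by (simp add: algebra_simps)
  qed
  then show ?thesis using r by simp
qed

end

definition WW :: "('a::field poly \<Rightarrow> ereal) \<Rightarrow> real \<Rightarrow> 'a poly poly \<Rightarrow> ereal" where
  "WW \<nu> \<delta> H = (INF b. \<nu> (coeff H b) + ereal (real b * \<delta>))"

context rv begin

lemma W_le: "WW \<nu> \<delta> H \<le> \<nu> (coeff H b) + ereal (real b * \<delta>)"
  unfolding WW_def by (rule INF_lower) simp

lemma W_ge: "(\<And>b. c \<le> \<nu> (coeff H b) + ereal (real b * \<delta>)) \<Longrightarrow> c \<le> WW \<nu> \<delta> H"
  unfolding WW_def by (rule INF_greatest) simp

lemma W_0[simp]: "WW \<nu> \<delta> 0 = \<infinity>"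
  unfolding WW_def by simp

lemma W_attain: assumes "H \<noteq> 0"
  shows "\<exists>b. WW \<nu> \<delta> H = \<nu> (coeff H b) + ereal (real b * \<delta>) \<and> coeff H b \<noteq> 0"
proof -
  let ?f = "\<lambda>b. \<nu> (coeff H b) + ereal (real b * \<delta>)"
  define M where "M = Min (?f ` {..degree H})"
  have "M \<in> ?f ` {..degree H}" unfolding M_def by (intro Min_in) auto
  then obtain b where b: "b \<le> degree H" "M = ?f b" by auto
  have "M \<le> WW \<nu> \<delta> H"
  proof (rule W_ge)
    fix c
    show "M \<le> ?f c"
    proof (cases "c \<le> degree H")
      case True then show ?thesis unfolding M_def by (intro Min_le) auto
    next
      case False then have "coeff H c = 0" by (simp add: coeff_eq_0)
      then show ?thesis by simp
    qed
  qed
  moreover have "WW \<nu> \<delta> H \<le> M" using b W_le by simp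
  ultimately have eq: "WW \<nu> \<delta> H = ?f b" using b by simp
  have "M \<le> ?f (degree H)" unfolding M_def by (intro Min_le) auto
  also have "\<dots> < \<infinity>" proof -
    obtain r where "\<nu> (lead_coeff H) = ereal r" using fin[of "lead_coeff H"] assms by auto
    then show ?thesis by simp
  qed
  finally have "coeff H b \<noteq> 0" using b by auto
  then show ?thesis using eq by blast
qed

lemma W_fin: assumes "H \<noteq> 0" shows "WW \<nu> \<delta> H = ereal (real_of_ereal (WW \<nu> \<delta> H))"
proof -
  obtain b where b: "WW \<nu> \<delta> H = \<nu> (coeff H b) + ereal (real b * \<delta>)" "coeff H b \<noteq> 0"
    using W_attain[OF assms] by blast
  obtain r where "\<nu> (coeff H b) = ereal r" using fin[OF b(2)] by blast
  then show ?thesis using b(1) by simp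
qed

lemma W_nninf: "WW \<nu> \<delta> H \<noteq> -\<infinity>"
  using W_fin[of H \<delta>] by (cases "H = 0") auto

lemma W_add: "min (WW \<nu> \<delta> H) (WW \<nu> \<delta> K) \<le> WW \<nu> \<delta> (H + K)"
proof (rule W_ge)
  fix b
  have "min (WW \<nu> \<delta> H) (WW \<nu> \<delta> K) \<le> min (\<nu> (coeff H b)) (\<nu> (coeff K b)) + ereal (real b * \<delta>)"
    using W_le[of \<delta> H b] W_le[of \<delta> K b] by (intro min_min_add_le)
  also have "\<dots> \<le> \<nu> (coeff (H + K) b) + ereal (real b * \<delta>)"
    using ultra[of "coeff H b" "coeff K b"] by (intro add_right_mono) simp
  finally show "min (WW \<nu> \<delta> H) (WW \<nu> \<delta> K) \<le> \<nu> (coeff (H + K) b) + ereal (real b * \<delta>)" .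
qed

lemma W_uminus: "WW \<nu> \<delta> (- H) = WW \<nu> \<delta> H"
  unfolding WW_def by (simp add: vuminus)

lemma W_diff: "min (WW \<nu> \<delta> H) (WW \<nu> \<delta> K) \<le> WW \<nu> \<delta> (H - K)"
  using W_add[of \<delta> H "-K"] W_uminus[of \<delta> K] by simp

lemma W_mult_ge: "WW \<nu> \<delta> H + WW \<nu> \<delta> K \<le> WW \<nu> \<delta> (H * K)"
proof (rule W_ge)
  fix b
  show "WW \<nu> \<delta> H + WW \<nu> \<delta> K \<le> \<nu> (coeff (H * K) b) + ereal (real b * \<delta>)"
    unfolding coeff_mult
  proof (rule sum_ge)
    fix i assume "i \<in> {..b}"
    then have i: "i \<le> b" by simp
    have "WW \<nu> \<delta> H + WW \<nu> \<delta> K \<le> (\<nu> (coeff H i) + ereal (real i * \<delta>)) + (\<nu> (coeff K (b - i)) + ereal (real (b - i) * \<delta>))"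
      by (intro add_mono W_le)
    also have "\<dots> = \<nu> (coeff H i * coeff K (b - i)) + ereal (real b * \<delta>)"
    proof -
      have e: "ereal (real b * \<delta>) = ereal (real i * \<delta>) + ereal (real (b - i) * \<delta>)"
        using i by (simp add: of_nat_diff left_diff_distrib)
      show ?thesis by (simp only: vmult e add_ac)
    qed
    finally show "WW \<nu> \<delta> H + WW \<nu> \<delta> K \<le> \<nu> (coeff H i * coeff K (b - i)) + ereal (real b * \<delta>)" .
  qed
qed


lemma ereal_lt_add_aux: "ereal a < x \<Longrightarrow> ereal b \<le> y \<Longrightarrow> ereal (a + b) < x + y"
  by (cases x; cases y) auto

lemma v_fin_of: assumes "ereal w = \<nu> c + ereal e" shows "\<nu> c = ereal (w - e)"
  using assms nninf[of c] by (cases "\<nu> c") auto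

lemma W_mult_le: assumes H: "H \<noteq> 0" and K: "K \<noteq> 0"
  shows "WW \<nu> \<delta> (H * K) \<le> WW \<nu> \<delta> H + WW \<nu> \<delta> K"
proof -
  define P where "P = (\<lambda>H b. WW \<nu> \<delta> H = \<nu> (coeff H b) + ereal (real b * \<delta>))"
  define b1 where "b1 = (LEAST b. P H b)"
  define b2 where "b2 = (LEAST b. P K b)"
  have P1: "P H b1" using W_attain[OF H] unfolding b1_def P_def by (metis (mono_tags, lifting) LeastI)
  have P2: "P K b2" using W_attain[OF K] unfolding b2_def P_def by (metis (mono_tags, lifting) LeastI)
  have L1: "WW \<nu> \<delta> H < \<nu> (coeff H i) + ereal (real i * \<delta>)" if "i < b1" for i
    using W_le[of \<delta> H i] not_less_Least[OF that[unfolded b1_def]] unfolding P_def by (simp add: order_less_le)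
  have L2: "WW \<nu> \<delta> K < \<nu> (coeff K i) + ereal (real i * \<delta>)" if "i < b2" for i
    using W_le[of \<delta> K i] not_less_Least[OF that[unfolded b2_def]] unfolding P_def by (simp add: order_less_le)
  obtain w1 where w1: "WW \<nu> \<delta> H = ereal w1" using W_fin[OF H] by blast
  obtain w2 where w2: "WW \<nu> \<delta> K = ereal w2" using W_fin[OF K] by blast
  have h1: "\<nu> (coeff H b1) = ereal (w1 - real b1 * \<delta>)" using P1 w1 unfolding P_def by (intro v_fin_of) simp
  have h2: "\<nu> (coeff K b2) = ereal (w2 - real b2 * \<delta>)" using P2 w2 unfolding P_def by (intro v_fin_of) simp
  define n where "n = b1 + b2"
  define rest where "rest = (\<Sum>i\<in>{..n} - {b1}. coeff H i * coeff K (n - i))"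
  have cf: "coeff (H * K) n = coeff H b1 * coeff K b2 + rest"
    unfolding coeff_mult rest_def by (subst sum.remove[of _ b1]) (auto simp: n_def)
  have "ereal (w1 + w2) < \<nu> rest + ereal (real n * \<delta>)"
    unfolding rest_def
  proof (rule sum_gt)
    fix i assume i: "i \<in> {..n} - {b1}"
    have e: "ereal (real n * \<delta>) = ereal (real i * \<delta>) + ereal (real (n - i) * \<delta>)"
      using i by (simp add: of_nat_diff left_diff_distrib)
    have eq: "\<nu> (coeff H i * coeff K (n - i)) + ereal (real n * \<delta>)
        = (\<nu> (coeff H i) + ereal (real i * \<delta>)) + (\<nu> (coeff K (n - i)) + ereal (real (n - i) * \<delta>))"
      by (simp only: vmult e add_ac)
    show "ereal (w1 + w2) < \<nu> (coeff H i * coeff K (n - i)) + ereal (real n * \<delta>)"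
    proof (cases "i < b1")
      case True
      show ?thesis unfolding eq
        by (rule ereal_lt_add_aux) (use L1[OF True] W_le[of \<delta> K "n - i"] w1 w2 in auto)
    next
      case False
      then have "n - i < b2" using i by (auto simp: n_def)
      have "ereal (w2 + w1) < (\<nu> (coeff K (n - i)) + ereal (real (n - i) * \<delta>)) + (\<nu> (coeff H i) + ereal (real i * \<delta>))"
        by (rule ereal_lt_add_aux) (use L2[OF \<open>n - i < b2\<close>] W_le[of \<delta> H i] w1 w2 in auto)
      then show ?thesis unfolding eq by (simp add: ac_simps)
    qed
  qed simp
  moreover have "\<nu> (coeff H b1 * coeff K b2) = ereal (w1 + w2 - real n * \<delta>)"
    by (simp add: vmult h1 h2 n_def algebra_simps)
  ultimately have lt: "\<nu> (coeff H b1 * coeff K b2) < \<nu> rest"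
    using nninf[of rest] by (cases "\<nu> rest") auto
  have "\<nu> (coeff (H * K) n) = ereal (w1 + w2 - real n * \<delta>)"
    unfolding cf strict[OF lt] by (simp add: vmult h1 h2 n_def algebra_simps)
  then have "WW \<nu> \<delta> (H * K) \<le> ereal (w1 + w2 - real n * \<delta>) + ereal (real n * \<delta>)"
    using W_le[of \<delta> "H * K" n] by simp
  then show ?thesis using w1 w2 by simp
qed

lemma W_mult: "WW \<nu> \<delta> (H * K) = WW \<nu> \<delta> H + WW \<nu> \<delta> K"
proof (cases "H = 0 \<or> K = 0")
  case True then show ?thesis using W_nninf by auto
next
  case False then show ?thesis using W_mult_le[of H K] W_mult_ge[of \<delta> H K] by (intro antisym) auto
qed

end


lemma qexp_partial:
  fixes Q g :: "'a::field poly"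
  shows "g = (\<Sum>i<N. qexp_coeff Q g i * Q ^ i) + (g div Q ^ N) * Q ^ N"
proof (induction N)
  case 0 then show ?case by simp
next
  case (Suc N)
  have "g div Q ^ N = (g div Q ^ N) mod Q + ((g div Q ^ N) div Q) * Q"
    by (simp add: mod_div_mult_eq)
  also have "(g div Q ^ N) div Q = g div Q ^ Suc N"
    by (simp only: poly_div_mult_right[symmetric] power_Suc2)
  finally have e: "g div Q ^ N = qexp_coeff Q g N + g div Q ^ Suc N * Q"
    by (simp add: qexp_coeff_def)
  have "g = (\<Sum>i<N. qexp_coeff Q g i * Q ^ i) + (qexp_coeff Q g N + g div Q ^ Suc N * Q) * Q ^ N"
    using Suc e by simp
  then show ?case by (simp add: algebra_simps power_Suc2)
qed

lemma qexp_sum: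
  fixes Q g :: "'a::field poly"
  assumes "degree Q > 0"
  shows "g = (\<Sum>i\<in>{0..degree g}. qexp_coeff Q g i * Q ^ i)"
proof -
  have Q0: "Q \<noteq> 0" using assms by auto
  have "degree g < degree (Q ^ Suc (degree g))"
  proof -
    have "Suc (degree g) * 1 \<le> Suc (degree g) * degree Q" using assms by (intro mult_le_mono2) simp
    moreover have "degree (Q ^ Suc (degree g)) = Suc (degree g) * degree Q" by (rule degree_power_eq[OF Q0])
    ultimately show ?thesis by (metis lessI mult_1_right order_less_le_trans)
  qed
  then have "g div Q ^ Suc (degree g) = 0" by (rule div_poly_less)
  moreover have "{..<Suc (degree g)} = {0..degree g}" by auto
  ultimately show ?thesis using qexp_partial[of g Q "Suc (degree g)"] by simp
qed

lemma degree_qexp_coeff: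
  fixes Q g :: "'a::field poly"
  assumes "degree Q > 0"
  shows "degree (qexp_coeff Q g i) < degree Q"
proof -
  have Q0: "Q \<noteq> 0" using assms by auto
  show ?thesis using degree_mod_less[OF Q0, of "g div Q ^ i"] assms by (auto simp: qexp_coeff_def)
qed

context rv begin

definition w :: "real \<Rightarrow> 'a poly \<Rightarrow> ereal" where "w \<delta> h = WW \<nu> \<delta> (TT h)"

lemma w_le_v: "w \<delta> h \<le> \<nu> h"
  using W_le[of \<delta> "TT h" 0] by (simp add: w_def coeff_TT_0)

lemma w_mult: "w \<delta> (p * q) = w \<delta> p + w \<delta> q"
  by (simp add: w_def TT_mult W_mult)

lemma w_diff: "min (w \<delta> p) (w \<delta> q) \<le> w \<delta> (p - q)"
  by (simp add: w_def TT_diff W_diff)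

lemma w_add: "min (w \<delta> p) (w \<delta> q) \<le> w \<delta> (p + q)"
  by (simp add: w_def TT_add W_add)

lemma TT_ne0: "h \<noteq> 0 \<Longrightarrow> TT h \<noteq> 0"
  using coeff_TT_0[of h] by auto

lemma w_fin: "h \<noteq> 0 \<Longrightarrow> w \<delta> h = ereal (real_of_ereal (w \<delta> h))"
  unfolding w_def by (rule W_fin[OF TT_ne0])

lemma w_0[simp]: "w \<delta> 0 = \<infinity>" by (simp add: w_def)

lemma w_mono: assumes "\<delta> \<le> \<delta>'" shows "w \<delta> h \<le> w \<delta>' h"
  unfolding w_def
proof (rule W_ge)
  fix b
  have "WW \<nu> \<delta> (TT h) \<le> \<nu> (coeff (TT h) b) + ereal (real b * \<delta>)" by (rule W_le)
  also have "\<dots> \<le> \<nu> (coeff (TT h) b) + ereal (real b * \<delta>')"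
    using assms by (intro add_left_mono) (simp add: mult_left_mono)
  finally show "WW \<nu> \<delta> (TT h) \<le> \<nu> (coeff (TT h) b) + ereal (real b * \<delta>')" .
qed

lemma eps_Max: "degree h > 0 \<Longrightarrow> eps \<nu> h = Max ((\<lambda>b. (\<nu> h - \<nu> (hasse b h)) / ereal (real b)) ` {1..degree h})"
  by (simp add: eps_def)

lemma eps_ge: assumes "degree h > 0" "b \<in> {1..degree h}"
  shows "(\<nu> h - \<nu> (hasse b h)) / ereal (real b) \<le> eps \<nu> h"
  unfolding eps_Max[OF assms(1)] using assms by (intro Max_ge) auto

lemma eps_attain: assumes "degree h > 0"
  shows "\<exists>b\<in>{1..degree h}. eps \<nu> h = (\<nu> h - \<nu> (hasse b h)) / ereal (real b)"
proof -
  have "eps \<nu> h \<in> (\<lambda>b. (\<nu> h - \<nu> (hasse b h)) / ereal (real b)) ` {1..degree h}"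
    unfolding eps_Max[OF assms] using assms by (intro Max_in) auto
  then show ?thesis by auto
qed

lemma div_le_iff_aux: assumes "\<nu> h = ereal x" "b > 0" "(\<nu> h - \<nu> c) / ereal (real b) \<le> ereal d"
  shows "\<nu> h \<le> \<nu> c + ereal (real b * d)"
proof (cases "\<nu> c")
  case (real y)
  then have "(x - y) / real b \<le> d" using assms by simp
  then have "x - y \<le> real b * d" using assms(2) by (simp add: divide_le_eq mult.commute)
  then show ?thesis using real assms by simp
next
  case PInf then show ?thesis by simp
next
  case MInf then show ?thesis using nninf[of c] by simp
qed

lemma div_ge_iff_aux: assumes "\<nu> h = ereal x" "b > 0" "ereal d \<le> (\<nu> h - \<nu> c) / ereal (real b)"
  shows "\<nu> c + ereal (real b * d) \<le> \<nu> h"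
proof (cases "\<nu> c")
  case (real y)
  then have "d \<le> (x - y) / real b" using assms by simp
  then have "real b * d \<le> x - y" using assms(2) by (simp add: le_divide_eq mult.commute)
  then show ?thesis using real assms by simp
next
  case PInf then show ?thesis using assms by simp
next
  case MInf then show ?thesis using nninf[of c] by simp
qed

lemma eps_w: assumes "eps \<nu> h \<le> ereal \<delta>" shows "w \<delta> h = \<nu> h"
proof (rule antisym[OF w_le_v])
  show "\<nu> h \<le> w \<delta> h" unfolding w_def
  proof (rule W_ge)
    fix b
    show "\<nu> h \<le> \<nu> (coeff (TT h) b) + ereal (real b * \<delta>)"
    proof (cases "b = 0")
      case True then show ?thesis by (simp add: coeff_TT_0)
    next
      case False
      show ?thesis
      proof (cases "b \<le> degree h")
        case True
        with False have dh: "degree h > 0" "b \<in> {1..degree h}" by auto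
        then have h0: "h \<noteq> 0" by auto
        have "(\<nu> h - \<nu> (hasse b h)) / ereal (real b) \<le> ereal \<delta>"
          using eps_ge[OF dh] assms by (rule order_trans)
        then show ?thesis using div_le_iff_aux[OF fin[OF h0]] False by (simp add: hasse_TT)
      next
        case False then show ?thesis by (simp add: coeff_TT_big)
      qed
    qed
  qed
qed

lemma eps_fin: assumes "degree h > 0" shows "eps \<nu> h = ereal (real_of_ereal (eps \<nu> h))"
proof -
  have h0: "h \<noteq> 0" using assms by auto
  obtain x where x: "\<nu> h = ereal x" using fin[OF h0] by blast
  obtain y where y: "\<nu> (hasse (degree h) h) = ereal y"
    using fin[of "hasse (degree h) h"] h0 by (auto simp: hasse_TT lead_TT)
  have lo: "ereal ((x - y) / real (degree h)) \<le> eps \<nu> h"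
    using eps_ge[OF assms, of "degree h"] assms x y by simp
  obtain b where b: "b \<in> {1..degree h}" "eps \<nu> h = (\<nu> h - \<nu> (hasse b h)) / ereal (real b)"
    using eps_attain[OF assms] by blast
  have "eps \<nu> h \<noteq> \<infinity>" using b x nninf[of "hasse b h"] by (cases "\<nu> (hasse b h)") auto
  then show ?thesis using lo by (cases "eps \<nu> h") auto
qed


lemma w1: "w \<delta> 1 = 0"
proof -
  obtain r where r: "w \<delta> 1 = ereal r" using w_fin[of 1 \<delta>] by auto
  have "w \<delta> 1 = w \<delta> 1 + w \<delta> 1" using w_mult[of \<delta> 1 1] by simp
  then have "r = r + r" using r by simp
  then show ?thesis using r by (simp add: zero_ereal_def)
qed

lemma w_pow: assumes "h \<noteq> 0" shows "w \<delta> (h ^ j) = ereal (real j * real_of_ereal (w \<delta> h))"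
proof -
  obtain r where r: "w \<delta> h = ereal r" using w_fin[OF assms] by auto
  have "w \<delta> (h ^ j) = ereal (real j * r)"
  proof (induction j)
    case 0 then show ?case using w1 by (simp add: zero_ereal_def)
  next
    case (Suc j)
    have "w \<delta> (h ^ Suc j) = w \<delta> h + w \<delta> (h ^ j)" by (simp add: w_mult)
    also have "\<dots> = ereal (r + real j * r)" using Suc r by simp
    finally show ?case by (simp add: algebra_simps)
  qed
  then show ?thesis using r by simp
qed

lemma w_sum_gt: assumes "\<And>i. i \<in> S \<Longrightarrow> c < w \<delta> (F i)" and "c < \<infinity>"
  shows "c < w \<delta> (sum F S)"
  using assms
proof (induction S rule: infinite_finite_induct)
  case (insert x S)
  have "c < w \<delta> (F x)" "c < w \<delta> (sum F S)" using insert by auto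
  then have "c < min (w \<delta> (F x)) (w \<delta> (sum F S))" by simp
  also have "\<dots> \<le> w \<delta> (F x + sum F S)" by (rule w_add)
  finally show ?case using insert by simp
qed auto

end


context rv begin

lemma main:
  fixes Q f q r :: "'a poly"
  assumes key: "key_poly \<nu> Q"
    and fe: "f = q * Q + r"
    and lt: "max (eps \<nu> f) (eps \<nu> r) < eps \<nu> Q"
  shows "\<nu> f + (eps \<nu> Q - max (eps \<nu> f) (eps \<nu> r)) \<le> trunc_val \<nu> Q (q * Q)
         \<and> \<nu> f = \<nu> r"
proof -
  define G where "G = max (eps \<nu> f) (eps \<nu> r)"
  have dQ: "degree Q > 0"
  proof (rule ccontr)
    assume "\<not> degree Q > 0"
    then have "eps \<nu> Q = -\<infinity>" by (simp add: eps_def)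
    then show False using lt by simp
  qed
  have Q0: "Q \<noteq> 0" using dQ by auto
  obtain \<epsilon> where eQ: "eps \<nu> Q = ereal \<epsilon>" using eps_fin[OF dQ] by blast
  define n where "n = degree Q"
  obtain vq where vQ: "\<nu> Q = ereal vq" using fin[OF Q0] by blast
  show ?thesis
  proof (cases "q = 0")
    case True
    then have "trunc_val \<nu> Q (q * Q) = \<infinity>"
      by (simp add: trunc_val_def qexp_coeff_def)
    then show ?thesis using fe True by simp
  next
    case q0: False
    define g where "g = q * Q"
    have g0: "g \<noteq> 0" using q0 Q0 by (simp add: g_def)
    have gfr: "g = f - r" using fe by (simp add: g_def)
    have Glt: "G < ereal \<epsilon>" using lt eQ by (simp only: G_def)
    have "G \<noteq> -\<infinity>"
    proof
      assume "G = -\<infinity>"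
      then have "eps \<nu> f = -\<infinity>" "eps \<nu> r = -\<infinity>" by (auto simp: G_def max_def split: if_splits)
      then have "degree f = 0" "degree r = 0" using eps_fin[of f] eps_fin[of r] by auto
      then have "degree g = 0" using gfr degree_diff_le[of f 0 r] by simp
      moreover have "degree g = degree q + degree Q" using q0 Q0 by (simp add: g_def degree_mult_eq)
      ultimately show False using dQ by simp
    qed
    moreover have "G < \<infinity>" using Glt by (cases G) auto
    ultimately obtain \<gamma> where Gg: "G = ereal \<gamma>" by (cases G) auto
    have ge: "\<gamma> < \<epsilon>" using Glt Gg by simp
    have "eps \<nu> f \<le> G" "eps \<nu> r \<le> G" unfolding G_def by (rule max.cobounded1, rule max.cobounded2)
    then have wf: "w \<gamma> f = \<nu> f" and wr: "w \<gamma> r = \<nu> r" using Gg by (auto intro: eps_w)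
    have wg: "min (\<nu> f) (\<nu> r) \<le> w \<gamma> g" using w_diff[of \<gamma> f r] wf wr gfr by simp
    have QL: "\<nu> Q \<le> \<nu> (coeff (TT Q) b) + ereal (real b * \<epsilon>)" for b
    proof (cases "b = 0")
      case True then show ?thesis by (simp add: coeff_TT_0)
    next
      case False
      show ?thesis
      proof (cases "b \<le> degree Q")
        case True
        with False have dh: "b \<in> {1..degree Q}" by auto
        show ?thesis using div_le_iff_aux[OF vQ, of b "hasse b Q" \<epsilon>] eps_ge[OF dQ dh] False eQ
          by (simp add: hasse_TT)
      next
        case False then show ?thesis by (simp add: coeff_TT_big)
      qed
    qed
    obtain b0 where b0: "b0 \<in> {1..n}" "\<nu> (coeff (TT Q) b0) + ereal (real b0 * \<epsilon>) = \<nu> Q"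
    proof -
      obtain b where b: "b \<in> {1..degree Q}" "eps \<nu> Q = (\<nu> Q - \<nu> (hasse b Q)) / ereal (real b)"
        using eps_attain[OF dQ] by blast
      have "\<nu> (hasse b Q) + ereal (real b * \<epsilon>) \<le> \<nu> Q"
        using b eQ by (intro div_ge_iff_aux[OF vQ]) auto
      then have "\<nu> (coeff (TT Q) b) + ereal (real b * \<epsilon>) = \<nu> Q"
        using QL[of b] by (simp add: hasse_TT)
      then show ?thesis using that b by (simp add: n_def)
    qed
    have cb0: "\<nu> (coeff (TT Q) b0) = ereal (vq - real b0 * \<epsilon>)"
      using b0(2) vQ by (intro v_fin_of) simp
    have wQ_up: "w \<delta> Q \<le> ereal (vq - (\<epsilon> - \<delta>))" if "\<delta> \<le> \<epsilon>" for \<delta>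
    proof -
      have "w \<delta> Q \<le> \<nu> (coeff (TT Q) b0) + ereal (real b0 * \<delta>)" unfolding w_def by (rule W_le)
      also have "\<dots> = ereal (vq - real b0 * (\<epsilon> - \<delta>))" using cb0 by (simp add: algebra_simps)
      also have "\<dots> \<le> ereal (vq - (\<epsilon> - \<delta>))"
      proof -
        have "1 * (\<epsilon> - \<delta>) \<le> real b0 * (\<epsilon> - \<delta>)" using b0(1) that by (intro mult_right_mono) auto
        then show ?thesis by simp
      qed
      finally show ?thesis .
    qed
    have wQ_lo: "ereal (vq - real n * (\<epsilon> - \<delta>)) \<le> w \<delta> Q" if "\<delta> \<le> \<epsilon>" for \<delta>
      unfolding w_def
    proof (rule W_ge)
      fix b
      show "ereal (vq - real n * (\<epsilon> - \<delta>)) \<le> \<nu> (coeff (TT Q) b) + ereal (real b * \<delta>)"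
      proof (cases "b \<le> n")
        case False then show ?thesis by (simp add: coeff_TT_big n_def)
      next
        case True
        show ?thesis
        proof (cases "\<nu> (coeff (TT Q) b)")
          case (real y)
          then have "vq \<le> y + real b * \<epsilon>" using QL[of b] vQ by simp
          moreover have "real b * (\<epsilon> - \<delta>) \<le> real n * (\<epsilon> - \<delta>)" using True that by (intro mult_right_mono) auto
          ultimately show ?thesis using real by (simp add: algebra_simps)
        next
          case PInf then show ?thesis by simp
        next
          case MInf then show ?thesis using nninf by simp
        qed
      qed
    qed
    obtain wqg where wqg: "w \<gamma> Q = ereal wqg" using w_fin[OF Q0] by blast
    have slope: "w \<gamma> Q + ereal (\<delta> - \<gamma>) \<le> w \<delta> Q" if "\<gamma> \<le> \<delta>" "\<delta> \<le> \<epsilon>" for \<delta>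
      unfolding w_def[of \<delta> Q]
    proof (rule W_ge)
      fix b
      show "w \<gamma> Q + ereal (\<delta> - \<gamma>) \<le> \<nu> (coeff (TT Q) b) + ereal (real b * \<delta>)"
      proof (cases "b = 0")
        case True
        have "wqg \<le> vq - (\<epsilon> - \<gamma>)" using wQ_up[of \<gamma>] ge wqg by simp
        then show ?thesis using True wqg vQ that by (simp add: coeff_TT_0)
      next
        case False
        show ?thesis
        proof (cases "\<nu> (coeff (TT Q) b)")
          case (real y)
          have "w \<gamma> Q \<le> \<nu> (coeff (TT Q) b) + ereal (real b * \<gamma>)" unfolding w_def by (rule W_le)
          then have "wqg \<le> y + real b * \<gamma>" using real wqg by simp
          moreover have "1 * (\<delta> - \<gamma>) \<le> real b * (\<delta> - \<gamma>)" using False that by (intro mult_right_mono) auto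
          ultimately show ?thesis using real wqg by (simp add: algebra_simps)
        next
          case PInf then show ?thesis by simp
        next
          case MInf then show ?thesis using nninf by simp
        qed
      qed
    qed
    have key_step: "min (\<nu> f) (\<nu> r) + ereal (\<delta> - \<gamma>) \<le> w \<delta> g" if "\<gamma> \<le> \<delta>" "\<delta> \<le> \<epsilon>" for \<delta>
    proof -
      have "min (\<nu> f) (\<nu> r) + ereal (\<delta> - \<gamma>) \<le> w \<gamma> g + ereal (\<delta> - \<gamma>)"
        using wg by (rule add_right_mono)
      also have "\<dots> = w \<gamma> q + (w \<gamma> Q + ereal (\<delta> - \<gamma>))" by (simp add: g_def w_mult add.assoc)
      also have "\<dots> \<le> w \<delta> q + w \<delta> Q" using that by (intro add_mono w_mono slope) auto
      also have "\<dots> = w \<delta> g" by (simp add: g_def w_mult)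
      finally show ?thesis .
    qed
    have gle: "min (\<nu> f) (\<nu> r) + ereal (\<epsilon> - \<gamma>) \<le> \<nu> g"
      using key_step[of \<epsilon>] ge w_le_v[of \<epsilon> g] by (auto intro: order_trans)
    have fr_ne: "\<not> (f = 0 \<and> r = 0)" using g0 gfr by auto
    have vfr: "\<nu> f = \<nu> r"
    proof (rule ccontr)
      assume ne: "\<nu> f \<noteq> \<nu> r"
      then consider "\<nu> f < \<nu> r" | "\<nu> r < \<nu> f" by fastforce
      then show False
      proof cases
        case 1
        have "\<nu> g = \<nu> f" using strict[of f "-r"] 1 gfr vuminus[of r] by simp
        moreover have "f \<noteq> 0" using 1 by auto
        then obtain x where x: "\<nu> f = ereal x" using fin by blast
        moreover have "min (\<nu> f) (\<nu> r) = \<nu> f" using 1 by simp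
        ultimately have "ereal x + ereal (\<epsilon> - \<gamma>) \<le> ereal x" using gle by simp
        then show False using ge by simp
      next
        case 2
        have "\<nu> g = \<nu> r" using strict[of "-r" f] 2 gfr vuminus[of r] by (simp add: add.commute)
        moreover have "r \<noteq> 0" using 2 by auto
        then obtain x where x: "\<nu> r = ereal x" using fin by blast
        moreover have "min (\<nu> f) (\<nu> r) = \<nu> r" using 2 by simp
        ultimately have "ereal x + ereal (\<epsilon> - \<gamma>) \<le> ereal x" using gle by simp
        then show False using ge by simp
      qed
    qed
    have f0: "f \<noteq> 0"
    proof
      assume "f = 0"
      then have "\<nu> r = \<infinity>" using vfr by simp
      then have "r = 0" using inf_iff by simp
      then show False using fr_ne \<open>f = 0\<close> by simp
    qed
    obtain \<phi> where phi: "\<nu> f = ereal \<phi>" using fin[OF f0] by blast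
    have mf: "min (\<nu> f) (\<nu> r) = ereal \<phi>" using vfr phi by simp
    define J where "J = degree g"
    define a where "a = qexp_coeff Q g"
    define t where "t = (\<lambda>i. a i * Q ^ i)"
    define \<mu> where "\<mu> = Min ((\<lambda>i. \<nu> (t i)) ` {0..J})"
    have tv: "trunc_val \<nu> Q (q * Q) = \<mu>"
      by (simp add: trunc_val_def \<mu>_def g_def J_def t_def a_def)
    have gsum: "g = (\<Sum>i\<in>{0..J}. t i)" using qexp_sum[OF dQ, of g] by (simp add: J_def t_def a_def)
    have eps_a: "eps \<nu> (a i) < ereal \<epsilon>" for i
    proof (rule ccontr)
      assume "\<not> eps \<nu> (a i) < ereal \<epsilon>"
      then have "eps \<nu> Q \<le> eps \<nu> (a i)" using eQ by simp
      then have "degree Q \<le> degree (a i)" using key by (simp add: key_poly_def)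
      then show False using degree_qexp_coeff[OF dQ, of g i] by (simp add: a_def)
    qed
    obtain i1 where i1: "i1 \<in> {0..J}" "t i1 \<noteq> 0"
    proof -
      have "\<exists>i\<in>{0..J}. t i \<noteq> 0"
      proof (rule ccontr)
        assume "\<not> (\<exists>i\<in>{0..J}. t i \<noteq> 0)"
        then have "(\<Sum>i\<in>{0..J}. t i) = 0" by simp
        then show False using gsum g0 by simp
      qed
      then show ?thesis using that by blast
    qed
    have \<mu>_le: "\<mu> \<le> \<nu> (t i)" if "i \<in> {0..J}" for i
      unfolding \<mu>_def using that by (intro Min_le) auto
    obtain i0 where i0: "i0 \<in> {0..J}" "\<mu> = \<nu> (t i0)"
    proof -
      have "\<mu> \<in> (\<lambda>i. \<nu> (t i)) ` {0..J}" unfolding \<mu>_def by (intro Min_in) auto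
      then show ?thesis using that by blast
    qed
    have "\<mu> < \<infinity>"
    proof -
      obtain y where "\<nu> (t i1) = ereal y" using fin[OF i1(2)] by blast
      then show ?thesis using \<mu>_le[OF i1(1)] by (cases \<mu>) auto
    qed
    moreover have "\<mu> \<noteq> -\<infinity>" using i0(2) nninf[of "t i0"] by simp
    ultimately obtain \<mu>r where \<mu>r: "\<mu> = ereal \<mu>r" by (cases \<mu>) auto
    have ti0: "t i0 \<noteq> 0"
    proof
      assume "t i0 = 0"
      then have "\<mu> = \<infinity>" using i0(2) by simp
      then show False using \<mu>r by simp
    qed
    have main_ineq: "\<phi> + (\<epsilon> - \<gamma>) \<le> \<mu>r"
    proof (rule ccontr)
      assume "\<not> \<phi> + (\<epsilon> - \<gamma>) \<le> \<mu>r"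
      then have small: "\<mu>r < \<phi> + (\<epsilon> - \<gamma>)" by simp
      define I where "I = {i\<in>{0..J}. t i \<noteq> 0 \<and> \<nu> (t i) = \<mu>}"
      define istar where "istar = Max I"
      have I_fin: "finite I" and i0I: "i0 \<in> I" using i0 ti0 by (auto simp: I_def)
      have istarI: "istar \<in> I" unfolding istar_def using I_fin i0I by (intro Max_in) auto
      have istar_ge: "i \<le> istar" if "i \<in> I" for i unfolding istar_def using I_fin that by simp
      define S where "S = {i\<in>{0..J}. t i \<noteq> 0 \<and> \<nu> (t i) \<noteq> \<mu>}"
      define \<tau> where "\<tau> i = real_of_ereal (\<nu> (t i))" for i
      have \<tau>_gt: "\<mu>r < \<tau> i" and \<tau>_eq: "\<nu> (t i) = ereal (\<tau> i)" if "i \<in> S" for i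
      proof -
        have tnz: "t i \<noteq> 0" and ne: "\<nu> (t i) \<noteq> \<mu>" and iJ: "i \<in> {0..J}"
          using that by (simp_all add: S_def)
        obtain y where y: "\<nu> (t i) = ereal y" using fin[OF tnz] by blast
        have \<tau>y: "\<tau> i = y" using y by (simp add: \<tau>_def)
        have "\<mu> \<le> \<nu> (t i)" by (rule \<mu>_le[OF iJ])
        then have "\<mu> < \<nu> (t i)" using ne by (simp add: order_less_le)
        then show "\<mu>r < \<tau> i" using y \<tau>y \<mu>r by simp
        show "\<nu> (t i) = ereal (\<tau> i)" using y \<tau>y by simp
      qed
      define K where "K = real J * real n + 1"
      have K0: "K > 0"
      proof -
        have "0 \<le> real J * real n" by simp
        then show ?thesis unfolding K_def by linarith
      qed
      define lb where "lb i = max (if degree (a i) > 0 then real_of_ereal (eps \<nu> (a i)) else \<gamma>)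
                                   (if i \<in> S then \<epsilon> - (\<tau> i - \<mu>r) / K else \<gamma>)" for i
      have lb_lt: "lb i < \<epsilon>" for i
      proof -
        have "(if degree (a i) > 0 then real_of_ereal (eps \<nu> (a i)) else \<gamma>) < \<epsilon>"
        proof (cases "degree (a i) > 0")
          case True
          obtain e where e: "eps \<nu> (a i) = ereal e" using eps_fin[OF True] by blast
          show ?thesis using True eps_a[of i] e by simp
        qed (use ge in simp)
        moreover have "(if i \<in> S then \<epsilon> - (\<tau> i - \<mu>r) / K else \<gamma>) < \<epsilon>"
        proof (cases "i \<in> S")
          case True
          have "0 < (\<tau> i - \<mu>r) / K" using \<tau>_gt[OF True] K0 by simp
          then show ?thesis using True by simp
        qed (use ge in simp)
        ultimately show ?thesis by (simp add: lb_def)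
      qed
      define L where "L = max (max \<gamma> (\<mu>r - \<phi> + \<gamma>)) (Max (lb ` {0..J}))"
      have "Max (lb ` {0..J}) \<in> lb ` {0..J}" by (intro Max_in) auto
      then have "Max (lb ` {0..J}) < \<epsilon>" using lb_lt by auto
      then have L_lt: "L < \<epsilon>" using ge small by (simp add: L_def)
      have lb_L: "lb i \<le> L" if "i \<in> {0..J}" for i
        unfolding L_def using that by (intro max.coboundedI2 Max_ge) auto
      define \<delta> where "\<delta> = (L + \<epsilon>) / 2"
      have dL: "L < \<delta>" and de: "\<delta> < \<epsilon>" using L_lt by (simp_all add: \<delta>_def field_simps)
      have gd: "\<gamma> \<le> \<delta>" and mud: "\<mu>r - \<phi> + \<gamma> < \<delta>" using dL by (simp_all add: L_def)
      have wa: "w \<delta> (a i) = \<nu> (a i)" if "i \<in> {0..J}" for i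
      proof (rule eps_w)
        show "eps \<nu> (a i) \<le> ereal \<delta>"
        proof (cases "degree (a i) > 0")
          case True
          obtain e where e: "eps \<nu> (a i) = ereal e" using eps_fin[OF True] by blast
          have "e \<le> lb i" using True e by (simp add: lb_def)
          then have "e \<le> \<delta>" using lb_L[OF that] dL by simp
          then show ?thesis using e by simp
        next
          case False then show ?thesis by (simp add: eps_def)
        qed
      qed
      obtain wq where wq: "w \<delta> Q = ereal wq" using w_fin[OF Q0] by blast
      define c where "c = vq - wq"
      have c_pos: "c > 0" using wQ_up[of \<delta>] de wq by (simp add: c_def)
      have c_le: "c \<le> real n * (\<epsilon> - \<delta>)" using wQ_lo[of \<delta>] de wq by (simp add: c_def)
      have wt: "w \<delta> (t i) = ereal (real_of_ereal (\<nu> (t i)) - real i * c)"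
        and vt: "\<nu> (t i) = ereal (real_of_ereal (\<nu> (t i)))"
        if "i \<in> {0..J}" "t i \<noteq> 0" for i
      proof -
        have a0: "a i \<noteq> 0" using that by (auto simp: t_def)
        obtain \<alpha> where \<alpha>: "\<nu> (a i) = ereal \<alpha>" using fin[OF a0] by blast
        have "\<nu> (t i) = ereal (\<alpha> + real i * vq)"
          using \<alpha> vQ by (simp add: t_def vmult vpow[OF Q0])
        moreover have "w \<delta> (t i) = ereal (\<alpha> + real i * wq)"
          using \<alpha> wq wa[OF that(1)] by (simp add: t_def w_mult w_pow[OF Q0])
        ultimately show "w \<delta> (t i) = ereal (real_of_ereal (\<nu> (t i)) - real i * c)"
          "\<nu> (t i) = ereal (real_of_ereal (\<nu> (t i)))" by (simp_all add: c_def algebra_simps)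
      qed
      have istar_J: "istar \<in> {0..J}" and tstar: "t istar \<noteq> 0" and vstar: "\<nu> (t istar) = \<mu>"
        using istarI by (auto simp: I_def)
      have wstar: "w \<delta> (t istar) = ereal (\<mu>r - real istar * c)"
        using wt[OF istar_J tstar] vstar \<mu>r by simp
      have rest_gt: "ereal (\<mu>r - real istar * c) < w \<delta> (t i)" if "i \<in> {0..J} - {istar}" for i
      proof (cases "t i = 0")
        case True then show ?thesis by simp
      next
        case tnz: False
        show ?thesis
        proof (cases "\<nu> (t i) = \<mu>")
          case True
          then have "i \<in> I" using that tnz by (simp add: I_def)
          then have "i \<le> istar" by (rule istar_ge)
          then have "i < istar" using that by simp
          then have "real istar * c > real i * c" using c_pos by simp
          then show ?thesis using wt[of i] that tnz True \<mu>r by simp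
        next
          case False
          then have iS: "i \<in> S" using that tnz by (simp add: S_def)
          have "\<epsilon> - (\<tau> i - \<mu>r) / K \<le> lb i" using iS by (simp add: lb_def)
          then have "\<epsilon> - (\<tau> i - \<mu>r) / K < \<delta>" using lb_L[of i] that dL by simp
          then have "(\<epsilon> - \<delta>) * K < \<tau> i - \<mu>r" using K0 by (simp add: field_simps)
          moreover have "real i * c \<le> real J * (real n * (\<epsilon> - \<delta>))"
            using that c_le c_pos by (intro mult_mono) auto
          moreover have "real J * (real n * (\<epsilon> - \<delta>)) \<le> (\<epsilon> - \<delta>) * K"
            using de by (simp add: K_def algebra_simps)
          moreover have "0 \<le> real istar * c" using c_pos by simp
          ultimately have "\<mu>r - real istar * c < \<tau> i - real i * c" by linarith
          then show ?thesis using wt[of i] that tnz \<tau>_def by simp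
        qed
      qed
      define rest where "rest = (\<Sum>i\<in>{0..J} - {istar}. t i)"
      have wrest: "ereal (\<mu>r - real istar * c) < w \<delta> rest"
        unfolding rest_def by (rule w_sum_gt) (use rest_gt in auto)
      have "g = t istar + rest" unfolding rest_def gsum using istar_J by (simp add: sum.remove)
      then have "t istar = g - rest" by simp
      then have "min (w \<delta> g) (w \<delta> rest) \<le> ereal (\<mu>r - real istar * c)"
        using w_diff[of \<delta> g rest] wstar by simp
      then have "w \<delta> g \<le> ereal (\<mu>r - real istar * c)" using wrest by (auto simp: min_def split: if_splits)
      also have "\<dots> \<le> ereal \<mu>r" using c_pos by simp
      finally have wg_le: "w \<delta> g \<le> ereal \<mu>r" .
      have "ereal \<phi> + ereal (\<delta> - \<gamma>) \<le> w \<delta> g"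
        using key_step[OF gd less_imp_le[OF de]] mf by simp
      then have "ereal \<phi> + ereal (\<delta> - \<gamma>) \<le> ereal \<mu>r" using wg_le by (rule order_trans)
      then show False using mud by simp
    qed
    have "\<nu> f + (eps \<nu> Q - max (eps \<nu> f) (eps \<nu> r)) = ereal (\<phi> + (\<epsilon> - \<gamma>))"
      using phi eQ Gg by (simp add: G_def[symmetric])
    also have "\<dots> \<le> trunc_val \<nu> Q (q * Q)" using main_ineq tv \<mu>r by simp
    finally show ?thesis using vfr by simp
  qed
qed

end

theorem lemma2p1:
  fixes \<nu> :: "'a::field poly \<Rightarrow> ereal" and Q f q r :: "'a poly"
  assumes "rank_one_valuation \<nu>"
    and "key_poly \<nu> Q"
    and "f = q * Q + r"
    and "max (eps \<nu> f) (eps \<nu> r) < eps \<nu> Q"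
  shows "\<nu> f + (eps \<nu> Q - max (eps \<nu> f) (eps \<nu> r)) \<le> trunc_val \<nu> Q (q * Q)
         \<and> \<nu> f = \<nu> r"
proof -
  interpret rv \<nu> by unfold_locales (rule assms(1))
  show ?thesis by (rule main[OF assms(2-4)])
qed

end
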